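(* Let $\lambda\in[0,\frac{\pi}{2})$ and let $(|B(\lambda)\rangle,\mathcal{M})$, $\mathcal{M}=(M_1,M_2,M_3)$, be a maximally impossible quantum scenario. Then $|M_1|=|M_2|$.
   Context: For $\varphi\in\mathbb{R}$, $E_\varphi=\cos\varphi X+\sin\varphi Y$ is the equatorial measurement, with $+1$ eigenvector $|\varphi\rangle=\frac{1}{\sqrt2}(|0\rangle+e^{i\varphi}|1\rangle)$ and $-1$ eigenvector $|\varphi+\pi\rangle$; outcomes $+1,-1$ relabelled $0,1$; measurements identified with angles. A measurement scenario $\mathcal{M}=(M_1,M_2,M_3)$ consists of finite nonempty sets $M_i\subseteq[0,\pi)$ of angles for qubit $i$. For a three-qubit state $|\psi\rangle$, the event $(A,B,C)\to(a,b,c)$ with $(A,B,C)\in M_1\times M_2\times M_3$ is impossible if $(\langle A+a\pi|\otimes\langle B+b\pi|\otimes\langle C+c\pi|)|\psi\rangle=0$. For $\lambda\in[0,\frac{\pi}{2})$, $|v_\lambda\rangle=\cos\frac{\lambda}{2}|0\rangle+\sin\frac{\lambda}{2}|1\rangle$, $|w_\lambda\rangle=\sin\frac{\lambda}{2}|0\rangle+\cos\frac{\lambda}{2}|1\rangle$, and the interpolant state is $|B(\lambda)\rangle=\frac{1}{\sqrt2}(|00\rangle|v_\lambda\rangle+|11\rangle|w_\lambda\rangle)$. The quantum scenario $(|B(\lambda)\rangle,\mathcal{M})$ is maximally impossible if for every $C\in M_3$ and every $z\in\{0,1\}$: for every $A\in M_1$ there exist $B\in M_2$ and $a,b\in\{0,1\}$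 with $(A,B,C)\to(a,b,z)$ impossible, and for every $B\in M_2$ there exist $A\in M_1$ and $a,b\in\{0,1\}$ with $(A,B,C)\to(a,b,z)$ impossible. *)

theory Defs
  imports Complex_Main
begin

text \<open>Computational basis coefficient of the equatorial ket
  |phi> = (|0> + e^{i phi}|1>)/sqrt 2, for basis index x in {0,1}.\<close>
definition eq_ket :: "real \<Rightarrow> nat \<Rightarrow> complex" where
  "eq_ket \<phi> x = (if x = 0 then 1 else cis \<phi>) / complex_of_real (sqrt 2)"

text \<open>Three-qubit states as coefficient functions on basis indices in {0,1}.\<close>
type_synonym state3 = "nat \<Rightarrow> nat \<Rightarrow> nat \<Rightarrow> complex"

text \<open>(<A + a pi| (x) <B + b pi| (x) <C + c pi|) |psi>\<close>
definition amp :: "state3 \<Rightarrow> real \<Rightarrow> real \<Rightarrow> real \<Rightarrow> nat \<Rightarrow> nat \<Rightarrow> nat \<Rightarrow> complex" where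
  "amp \<psi> A B C a b c =
     (\<Sum>x\<in>{0,1}. \<Sum>y\<in>{0,1}. \<Sum>z\<in>{0,1}.
        cnj (eq_ket (A + real a * pi) x) * cnj (eq_ket (B + real b * pi) y) *
        cnj (eq_ket (C + real c * pi) z) * \<psi> x y z)"

definition impossible :: "state3 \<Rightarrow> real \<Rightarrow> real \<Rightarrow> real \<Rightarrow> nat \<Rightarrow> nat \<Rightarrow> nat \<Rightarrow> bool" where
  "impossible \<psi> A B C a b c \<longleftrightarrow> amp \<psi> A B C a b c = 0"

definition v_vec :: "real \<Rightarrow> nat \<Rightarrow> complex" where
  "v_vec l z = (if z = 0 then complex_of_real (cos (l/2)) else complex_of_real (sin (l/2)))"

definition w_vec :: "real \<Rightarrow> nat \<Rightarrow> complex" where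
  "w_vec l z = (if z = 0 then complex_of_real (sin (l/2)) else complex_of_real (cos (l/2)))"

definition B_state :: "real \<Rightarrow> state3" where
  "B_state l x y z =
     ((if x = 0 \<and> y = 0 then v_vec l z else 0) +
      (if x = 1 \<and> y = 1 then w_vec l z else 0)) / complex_of_real (sqrt 2)"

definition meas_scenario :: "real set \<Rightarrow> real set \<Rightarrow> real set \<Rightarrow> bool" where
  "meas_scenario M1 M2 M3 \<longleftrightarrow>
     (\<forall>M\<in>{M1, M2, M3}. finite M \<and> M \<noteq> {} \<and> M \<subseteq> {0..<pi})"

definition maximally_impossible :: "state3 \<Rightarrow> real set \<Rightarrow> real set \<Rightarrow> real set \<Rightarrow> bool" where
  "maximally_impossible \<psi> M1 M2 M3 \<longleftrightarrow>
     (\<forall>C\<in>M3. \<forall>z\<in>{0,1::nat}.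
        (\<forall>A\<in>M1. \<exists>B\<in>M2. \<exists>a\<in>{0,1}. \<exists>b\<in>{0,1}. impossible \<psi> A B C a b z) \<and>
        (\<forall>B\<in>M2. \<exists>A\<in>M1. \<exists>a\<in>{0,1}. \<exists>b\<in>{0,1}. impossible \<psi> A B C a b z))"

end

theory Submission
  imports Defs "HOL-Library.Real_Mod"
begin
lemma aux: "(x::complex)*y*s + x*y*w*c = x*y*(s + c*w)" by algebra

lemma amp_B:
  "amp (B_state l) A B C a b z =
   (complex_of_real (cos (l/2)) + complex_of_real (sin (l/2)) * cis (-(C + real z * pi))
    + cis (-(A + real a * pi + (B + real b * pi))) *
      (complex_of_real (sin (l/2)) + complex_of_real (cos (l/2)) * cis (-(C + real z * pi)))) / 4"
proof -
  have s: "complex_of_real (sqrt 2) * complex_of_real (sqrt 2) * complex_of_real (sqrt 2) * complex_of_real (sqrt 2) = 4"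
  proof -
    have "sqrt 2 * sqrt 2 * sqrt 2 * sqrt 2 = (4::real)"
      by (simp add: mult.assoc[symmetric])
    then show ?thesis by (metis of_real_mult of_real_numeral)
  qed
  have c: "cis (-(A + real a * pi + (B + real b * pi))) = cis (-(A + real a * pi)) * cis (-(B + real b * pi))"
    by (simp add: cis_mult)
  show ?thesis
  unfolding amp_def c
  apply (simp add: B_state_def)
  apply (simp add: eq_ket_def v_vec_def w_vec_def s cis_cnj add_divide_distrib)
  apply (rule aux)
  done
qed

lemma q_nz:
  assumes "0 \<le> l" "l < pi/2"
  shows "complex_of_real (sin (l/2)) + complex_of_real (cos (l/2)) * cis t \<noteq> 0"
proof
  assume h: "complex_of_real (sin (l/2)) + complex_of_real (cos (l/2)) * cis t = 0"
  hence "norm (complex_of_real (sin (l/2))) = norm (complex_of_real (cos (l/2)) * cis t)"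
    by (metis add.inverse_unique norm_minus_cancel)
  hence "\<bar>sin (l/2)\<bar> = \<bar>cos (l/2)\<bar>" by (simp add: norm_mult)
  hence "(sin (l/2))^2 = (cos (l/2))^2" by (metis power2_abs)
  moreover have "cos l = (cos (l/2))^2 - (sin (l/2))^2" using cos_double[of "l/2"] by simp
  ultimately have "cos l = 0" by simp
  moreover have "cos l > 0" using assms by (intro cos_gt_zero_pi) auto
  ultimately show False by simp
qed

lemma core:
  assumes "0 \<le> l" "l < pi/2"
    and "impossible (B_state l) A B C a b z" "impossible (B_state l) A' B' C a' b' z"
  shows "\<exists>n::int. (A + real a * pi + (B + real b * pi)) - (A' + real a' * pi + (B' + real b' * pi)) = of_int n * (2 * pi)"
proof -
  define p where "p = complex_of_real (cos (l/2)) + complex_of_real (sin (l/2)) * cis (-(C + real z * pi))"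
  define q where "q = complex_of_real (sin (l/2)) + complex_of_real (cos (l/2)) * cis (-(C + real z * pi))"
  define x where "x = A + real a * pi + (B + real b * pi)"
  define y where "y = A' + real a' * pi + (B' + real b' * pi)"
  have q0: "q \<noteq> 0" unfolding q_def using q_nz assms(1,2) by blast
  have e1: "p + cis (-x) * q = 0" using assms(3) unfolding impossible_def amp_B p_def q_def x_def by simp
  have e2: "p + cis (-y) * q = 0" using assms(4) unfolding impossible_def amp_B p_def q_def y_def by simp
  have "cis (-x) * q = - p" using e1 by (metis add.commute add_eq_0_iff)
  moreover have "cis (-y) * q = - p" using e2 by (metis add.commute add_eq_0_iff)
  ultimately have "cis (-x) * q = cis (-y) * q" by simp
  hence "cis (-x) = cis (-y)" using q0 by simp
  hence "cis (-x) / cis (-y) = 1" by simp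
  hence "cis (y - x) = 1" by (simp add: cis_divide)
  then obtain n where "y - x = of_int n * (2 * pi)" using cis_eq_1_iff by blast
  hence "x - y = of_int (-n) * (2*pi)" by simp
  thus ?thesis unfolding x_def y_def by blast
qed

lemma int_pi_small:
  fixes m :: int
  assumes "\<bar>of_int m * pi\<bar> < pi"
  shows "m = 0"
proof (rule ccontr)
  assume "m \<noteq> 0"
  hence "\<bar>of_int m\<bar> \<ge> (1::real)" by linarith
  hence "\<bar>of_int m\<bar> * pi \<ge> 1 * pi" by (intro mult_right_mono) auto
  thus False using assms by (simp add: abs_mult)
qed

lemma uniqB:
  assumes "0 \<le> l" "l < pi/2"
    and "impossible (B_state l) A B C a b z" "impossible (B_state l) A B' C a' b' z"
    and "B \<in> {0..<pi}" "B' \<in> {0..<pi}"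
  shows "B = B'"
proof -
  obtain n :: int where n: "(A + real a * pi + (B + real b * pi)) - (A + real a' * pi + (B' + real b' * pi)) = of_int n * (2 * pi)"
    using core[OF assms(1-4)] by blast
  define m where "m = 2 * n + int a' + int b' - int a - int b"
  have e: "B - B' = of_int m * pi" using n unfolding m_def by (simp add: algebra_simps)
  moreover have "\<bar>B - B'\<bar> < pi" using assms(5,6) by auto
  ultimately have "m = 0" using int_pi_small by metis
  thus ?thesis using e by simp
qed

lemma uniqA:
  assumes "0 \<le> l" "l < pi/2"
    and "impossible (B_state l) A B C a b z" "impossible (B_state l) A' B C a' b' z"
    and "A \<in> {0..<pi}" "A' \<in> {0..<pi}"
  shows "A = A'"
proof -
  obtain n :: int where n: "(A + real a * pi + (B + real b * pi)) - (A' + real a' * pi + (B + real b' * pi)) = of_int n * (2 * pi)"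
    using core[OF assms(1-4)] by blast
  define m where "m = 2 * n + int a' + int b' - int a - int b"
  have e: "A - A' = of_int m * pi" using n unfolding m_def by (simp add: algebra_simps)
  moreover have "\<bar>A - A'\<bar> < pi" using assms(5,6) by auto
  ultimately have "m = 0" using int_pi_small by metis
  thus ?thesis using e by simp
qed

theorem lemma11:
  fixes l :: real and M1 M2 M3 :: "real set"
  assumes "0 \<le> l" and "l < pi / 2"
    and "meas_scenario M1 M2 M3"
    and "maximally_impossible (B_state l) M1 M2 M3"
  shows "card M1 = card M2"
proof -
  have f1: "finite M1" "M1 \<subseteq> {0..<pi}" and f2: "finite M2" "M2 \<subseteq> {0..<pi}" and ne: "M3 \<noteq> {}"
    using assms(3) unfolding meas_scenario_def by auto
  obtain C where C: "C \<in> M3" using ne by blast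
  have h1: "\<forall>A\<in>M1. \<exists>B\<in>M2. \<exists>a b. impossible (B_state l) A B C a b 0"
   and h2: "\<forall>B\<in>M2. \<exists>A\<in>M1. \<exists>a b. impossible (B_state l) A B C a b 0"
    using assms(4) C unfolding maximally_impossible_def by blast+
  define R where "R = (\<lambda>A B. \<exists>a b. impossible (B_state l) A B C a b 0)"
  define f where "f = (\<lambda>A. SOME B. B \<in> M2 \<and> R A B)"
  define g where "g = (\<lambda>B. SOME A. A \<in> M1 \<and> R A B)"
  have fp: "f A \<in> M2 \<and> R A (f A)" if "A \<in> M1" for A
    unfolding f_def using h1 that someI_ex[of "\<lambda>B. B \<in> M2 \<and> R A B"] unfolding R_def by blast
  have gp: "g B \<in> M1 \<and> R (g B) B" if "B \<in> M2" for B
    unfolding g_def using h2 that someI_ex[of "\<lambda>A. A \<in> M1 \<and> R A B"] unfolding R_def by blast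
  have "inj_on f M1"
  proof (rule inj_onI)
    fix x y assume xy: "x \<in> M1" "y \<in> M1" "f x = f y"
    from fp[OF xy(1)] obtain a b where i1: "impossible (B_state l) x (f x) C a b 0" unfolding R_def by blast
    from fp[OF xy(2)] obtain a' b' where i2: "impossible (B_state l) y (f x) C a' b' 0" unfolding R_def using xy(3) by auto
    show "x = y" using uniqA[OF assms(1,2) i1 i2] xy f1 by blast
  qed
  hence le1: "card M1 \<le> card M2" using fp f2 by (intro card_inj_on_le) auto
  have "inj_on g M2"
  proof (rule inj_onI)
    fix x y assume xy: "x \<in> M2" "y \<in> M2" "g x = g y"
    from gp[OF xy(1)] obtain a b where i1: "impossible (B_state l) (g x) x C a b 0" unfolding R_def by blast
    from gp[OF xy(2)] obtain a' b' where i2: "impossible (B_state l) (g x) y C a' b' 0" unfolding R_def using xy(3) by auto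
    show "x = y" using uniqB[OF assms(1,2) i1 i2] xy f2 by blast
  qed
  hence le2: "card M2 \<le> card M1" using gp f1 by (intro card_inj_on_le) auto
  show ?thesis using le1 le2 by simp
qed

end
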